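(* Let $r \ge 1$, and for $i=1,\dots,r$ let $a_i = n_i\sigma_i > 0$ and $s_i \ge 0$ be the current sample size of stratum $i$. Let $Q[1..r]$ be an array of triples $(x,y,z)$ with $Q[i]$ initialized to $(i,\, n_i\sigma_i,\, s_i/(n_i\sigma_i))$, and then sorted in ascending order of the $z$ component (ties broken arbitrarily). Let $M > 0$ be any memory budget. If at least one stratum is not oversized under budget $M$, then the set of strata that are not oversized under budget $M$ is exactly $\{Q[1].x, Q[2].x, \dots, Q[p].x\}$ for some $p \in \{1,\dots,r\}$, i.e. it occupies a contiguous prefix of the sorted array $Q$.
   Context: Under a memory budget $M$, the Neyman allocation size of stratum $i$ is $M_i = M\cdot n_i\sigma_i/\sum_{j=1}^r n_j\sigma_j$. Stratum $i$ (with current sample size $s_i$) is called oversized under budget $M$ if $s_i > M_i$, and not oversized otherwise. *)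

theory Defs
  imports Complex_Main "HOL-Library.Multiset"
begin

definition neyman_size :: "real \<Rightarrow> (nat \<Rightarrow> nat) \<Rightarrow> (nat \<Rightarrow> real) \<Rightarrow> nat \<Rightarrow> nat \<Rightarrow> real" where
  "neyman_size M n \<sigma> r i = M * (real (n i) * \<sigma> i) / (\<Sum>j\<in>{1..r}. real (n j) * \<sigma> j)"

definition oversized :: "real \<Rightarrow> (nat \<Rightarrow> nat) \<Rightarrow> (nat \<Rightarrow> real) \<Rightarrow> (nat \<Rightarrow> real) \<Rightarrow> nat \<Rightarrow> nat \<Rightarrow> bool" where
  "oversized M n \<sigma> s r i \<longleftrightarrow> s i > neyman_size M n \<sigma> r i"

end

theory Submission
  imports Defs
begin

theorem lemma4:
  fixes r :: nat and n :: "nat \<Rightarrow> nat" and \<sigma> s :: "nat \<Rightarrow> real" and M :: real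
    and Q :: "(nat \<times> real \<times> real) list"
  assumes "r \<ge> 1"
    and "\<And>i. i \<in> {1..r} \<Longrightarrow> real (n i) * \<sigma> i > 0"
    and "\<And>i. i \<in> {1..r} \<Longrightarrow> s i \<ge> 0"
    and "mset Q = mset (map (\<lambda>i. (i, real (n i) * \<sigma> i, s i / (real (n i) * \<sigma> i))) [1..<r+1])"
    and "sorted (map (\<lambda>q. snd (snd q)) Q)"
    and "M > 0"
    and "\<exists>i\<in>{1..r}. \<not> oversized M n \<sigma> s r i"
  shows "\<exists>p\<in>{1..r}. {i\<in>{1..r}. \<not> oversized M n \<sigma> s r i} = {fst (Q ! (k - 1)) | k. k \<in> {1..p}}"
proof -
  define a where "a i = real (n i) * \<sigma> i" for i
  define S where "S = (\<Sum>j\<in>{1..r}. a j)"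
  define c where "c = M / S"
  define z where "z q = snd (snd q)" for q :: "nat \<times> real \<times> real"
  have apos: "\<And>i. i \<in> {1..r} \<Longrightarrow> a i > 0" using assms(2) a_def by auto
  have Spos: "S > 0" unfolding S_def
    using assms(1) apos by (intro sum_pos) auto
  have ov: "\<not> oversized M n \<sigma> s r i \<longleftrightarrow> s i / a i \<le> c" if "i \<in> {1..r}" for i
  proof -
    have "\<not> oversized M n \<sigma> s r i \<longleftrightarrow> s i \<le> M * a i / S"
      unfolding oversized_def neyman_size_def a_def S_def by auto
    also have "\<dots> \<longleftrightarrow> s i \<le> c * a i" unfolding c_def by (simp add: field_simps)
    also have "\<dots> \<longleftrightarrow> s i / a i \<le> c" using apos[OF that] by (simp add: pos_divide_le_eq)
    finally show ?thesis .
  qed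
  have setQ: "set Q = (\<lambda>i. (i, a i, s i / a i)) ` {1..r}"
    using arg_cong[OF assms(4), of set_mset] unfolding a_def by auto
  have lenQ: "length Q = r"
    using arg_cong[OF assms(4), of size] by simp
  have sortz: "sorted (map z Q)" using assms(5) unfolding z_def by simp
  define P where "P = length (takeWhile (\<lambda>q. z q \<le> c) Q)"
  have PleQ: "P \<le> r" unfolding P_def using lenQ length_takeWhile_le by metis
  have key: "z (Q ! k) \<le> c \<longleftrightarrow> k < P" if "k < r" for k
  proof
    assume "z (Q ! k) \<le> c"
    show "k < P"
    proof (rule ccontr)
      assume "\<not> k < P"
      hence "P < length Q" using that lenQ by simp
      hence nc: "\<not> z (Q ! P) \<le> c" unfolding P_def by (rule nth_length_takeWhile)
      have "z (Q ! P) \<le> z (Q ! k)"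
        using sortz \<open>\<not> k < P\<close> that lenQ by (auto simp: sorted_iff_nth_mono)
      with nc \<open>z (Q ! k) \<le> c\<close> show False by simp
    qed
  next
    assume "k < P"
    thus "z (Q ! k) \<le> c" unfolding P_def
      using set_takeWhileD[OF nth_mem, of k] takeWhile_nth[of k]
      by fastforce
  qed
  obtain i0 where i0: "i0 \<in> {1..r}" "\<not> oversized M n \<sigma> s r i0" using assms(7) by blast
  have "(i0, a i0, s i0 / a i0) \<in> set Q" using setQ i0 by auto
  then obtain k0 where k0: "k0 < r" "Q ! k0 = (i0, a i0, s i0 / a i0)"
    by (metis in_set_conv_nth lenQ)
  have "z (Q ! k0) \<le> c" using k0 ov i0 unfolding z_def by simp
  hence "k0 < P" using key k0 by blast
  hence P1: "P \<in> {1..r}" using PleQ by simp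
  have elem: "\<exists>i\<in>{1..r}. Q ! k = (i, a i, s i / a i)" if "k < r" for k
    using nth_mem[of k Q] that lenQ setQ by auto
  have "{i\<in>{1..r}. \<not> oversized M n \<sigma> s r i} = {fst (Q ! (k - 1)) | k. k \<in> {1..P}}"
  proof (intro equalityI subsetI)
    fix i assume "i \<in> {i\<in>{1..r}. \<not> oversized M n \<sigma> s r i}"
    hence i: "i \<in> {1..r}" "s i / a i \<le> c" using ov by auto
    have "(i, a i, s i / a i) \<in> set Q" using setQ i by auto
    then obtain k where k: "k < r" "Q ! k = (i, a i, s i / a i)"
      by (metis in_set_conv_nth lenQ)
    have "z (Q ! k) \<le> c" using k i unfolding z_def by simp
    hence "k < P" using key k by blast
    hence "Suc k \<in> {1..P}" by simp
    moreover have "i = fst (Q ! (Suc k - 1))" using k by simp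
    ultimately show "i \<in> {fst (Q ! (k - 1)) | k. k \<in> {1..P}}" by blast
  next
    fix i assume "i \<in> {fst (Q ! (k - 1)) | k. k \<in> {1..P}}"
    then obtain k where k: "k \<in> {1..P}" "i = fst (Q ! (k - 1))" by blast
    have kr: "k - 1 < r" "k - 1 < P" using k PleQ by auto
    obtain j where j: "j \<in> {1..r}" "Q ! (k - 1) = (j, a j, s j / a j)" using elem[OF kr(1)] by blast
    have "z (Q ! (k - 1)) \<le> c" using key kr by blast
    hence "s j / a j \<le> c" using j unfolding z_def by simp
    thus "i \<in> {i\<in>{1..r}. \<not> oversized M n \<sigma> s r i}" using j k ov by auto
  qed
  thus ?thesis using P1 by blast
qed

end
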